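(* Let $K\ge2$, $\varepsilon>0$, $\gamma=\gamma(\mu^* )\in\mathcal{P}^\varepsilon(K)$, $\eta\ge0$ and $\varepsilon_\pi\in[0,1]$. For $o\in\mathbb{R}^K_{>0}$ define $$\pi^{\varepsilon_\pi}_k(o)=(1-\varepsilon_\pi)\frac{\gamma_ko_k^{-\eta}}{\sum_{\ell}\gamma_\ell o_\ell^{-\eta}}+\varepsilon_\pi\gamma_k.$$ Then $\mathbf 1=(1,\dots,1)$ is a globally asymptotically stable equilibrium of the system $\dot o_k(t)=\dfrac{\pi^{\varepsilon_\pi}_k(o(t))}{\gamma_k}-o_k(t)$, $k=1,\dots,K$.
   Context: $\mathcal{P}^\varepsilon(K)$ is the set of probability vectors on $\{1,\dots,K\}$ with entries $\ge\varepsilon$. For $\dot z=h(z)$ with solutions $z(t;z_0,t_0)$, an equilibrium $z^*$ is globally asymptotically stable if (1) for each $\eta'>0$ there is $\delta>0$ independent of $t_0$ with $|z_0-z^*|<\delta\Rightarrow|z(t;z_0,t_0)-z^*|<\eta'$ for all $t\ge t_0\ge 0$, and (2) for all $\eta',\rho>0$ there is $T<\infty$ independent of $t_0$ with $|z(t;z_0,t_0)-z^*|<\eta'$ for $t\ge t_0+T$ whenever $|z_0-z^*|<\rho$. *)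

theory Defs
  imports "HOL-Analysis.Analysis"
begin

definition prob_eps :: "real \<Rightarrow> (real ^ 'k::finite) set" where
  "prob_eps eps = {g. (\<forall>k. g $ k \<ge> eps) \<and> (\<Sum>k\<in>UNIV. g $ k) = 1}"

definition pi_eps :: "real ^ 'k::finite \<Rightarrow> real \<Rightarrow> real \<Rightarrow> real ^ 'k \<Rightarrow> real ^ 'k" where
  "pi_eps g eta epi x = (\<chi> k. (1 - epi) * (g $ k * (x $ k) powr (- eta))
        / (\<Sum>l\<in>UNIV. g $ l * (x $ l) powr (- eta)) + epi * g $ k)"

definition field :: "real ^ 'k::finite \<Rightarrow> real \<Rightarrow> real \<Rightarrow> real ^ 'k \<Rightarrow> real ^ 'k" where
  "field g eta epi x = (\<chi> k. pi_eps g eta epi x $ k / g $ k - x $ k)"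

definition is_solution ::
  "('a::real_normed_vector \<Rightarrow> 'a) \<Rightarrow> 'a set \<Rightarrow> (real \<Rightarrow> 'a) \<Rightarrow> real \<Rightarrow> 'a \<Rightarrow> bool" where
  "is_solution h D z t0 z0 \<longleftrightarrow> z t0 = z0 \<and>
     (\<forall>t\<ge>t0. z t \<in> D \<and> (z has_vector_derivative h (z t)) (at t within {t0..}))"

definition glob_asymp_stable ::
  "('a::real_normed_vector \<Rightarrow> 'a) \<Rightarrow> 'a set \<Rightarrow> 'a \<Rightarrow> bool" where
  "glob_asymp_stable h D zs \<longleftrightarrow> zs \<in> D \<and> h zs = 0 \<and>
     (\<forall>e>0. \<exists>d>0. \<forall>t0\<ge>0. \<forall>z0\<in>D. \<forall>z. is_solution h D z t0 z0 \<and> norm (z0 - zs) < d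
          \<longrightarrow> (\<forall>t\<ge>t0. norm (z t - zs) < e)) \<and>
     (\<forall>e>0. \<forall>\<rho>>0. \<exists>T. \<forall>t0\<ge>0. \<forall>z0\<in>D. \<forall>z. is_solution h D z t0 z0 \<and> norm (z0 - zs) < \<rho>
          \<longrightarrow> (\<forall>t\<ge>t0 + T. norm (z t - zs) < e))"

end

theory Submission imports Defs begin

lemma max_comparison:
  fixes u D :: "'k::finite \<Rightarrow> real \<Rightarrow> real" and a C :: real
  assumes der: "\<And>k t. t \<ge> a \<Longrightarrow> (u k has_real_derivative D k t) (at t within {a..})"
    and neg: "\<And>k t. t \<ge> a \<Longrightarrow> (\<forall>j. u j t \<le> u k t) \<Longrightarrow> D k t \<le> 0"
    and init: "\<And>j. u j a \<le> C"
  shows "\<And>j t. t \<ge> a \<Longrightarrow> u j t \<le> C"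
proof -
  have main: "u j t \<le> C + dl * (t - a)" if "dl > 0" "t \<ge> a" for dl j t
  proof (rule ccontr)
    assume bad0: "\<not> u j t \<le> C + dl * (t - a)"
    define B where "B = {t. a \<le> t \<and> (\<exists>j. u j t > C + dl * (t - a))}"
    have "t \<in> B" using bad0 that unfolding B_def by (auto simp: not_le)
    hence Bne: "B \<noteq> {}" by blast
    have bdd: "bdd_below B" unfolding B_def by (rule bdd_belowI[of _ a]) auto
    define s where "s = Inf B"
    have sa: "s \<ge> a" unfolding s_def using Bne by (intro cInf_greatest) (auto simp: B_def)
    have below: "\<forall>j. u j \<tau> \<le> C + dl * (\<tau> - a)" if "a \<le> \<tau>" "\<tau> < s" for \<tau>
    proof -
      have "\<tau> \<notin> B" using cInf_lower[OF _ bdd] that unfolding s_def by force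
      thus ?thesis using that unfolding B_def by (auto simp: not_less)
    qed
    have cont: "continuous (at t within {a..}) (u k)" if "t \<ge> a" for k t
      using DERIV_continuous[OF der[OF that]] .
    have sgood: "u k s \<le> C + dl * (s - a)" for k
    proof (cases "s = a")
      case True thus ?thesis using init[of k] by simp
    next
      case False
      hence sa': "s > a" using sa by simp
      show ?thesis
      proof (rule ccontr)
        assume "\<not> ?thesis"
        hence lt: "C + dl * (s - a) < u k s" by simp
        have "((\<lambda>y. u k y - dl * (y - a)) \<longlongrightarrow> u k s - dl * (s - a)) (at s within {a..})"
          using cont[OF sa, unfolded continuous_within] by (auto intro!: tendsto_intros)
        hence "eventually (\<lambda>y. u k y - dl * (y - a) > C) (at s within {a..})"
          using lt by (intro order_tendstoD(1)) auto
        then obtain d where d: "d > 0" "\<forall>y\<in>{a..}. y \<noteq> s \<and> dist y s < d \<longrightarrow> u k y - dl * (y - a) > C"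
          unfolding eventually_at by blast
        define y where "y = max a (s - d/2)"
        have "a \<le> y" "y < s" "dist y s < d" using d sa' unfolding y_def dist_real_def by auto
        hence "u k y - dl * (y - a) > C" using d by auto
        moreover have "u k y \<le> C + dl * (y - a)" using below \<open>a \<le> y\<close> \<open>y < s\<close> by blast
        ultimately show False by simp
      qed
    qed
    have ev: "eventually (\<lambda>y. u k y \<le> C + dl * (y - a)) (at_right s)" for k
    proof (cases "u k s < C + dl * (s - a)")
      case True
      have "((\<lambda>y. u k y - dl * (y - a)) \<longlongrightarrow> u k s - dl * (s - a)) (at s within {a..})"
        using cont[OF sa, unfolded continuous_within] by (auto intro!: tendsto_intros)
      hence "eventually (\<lambda>y. u k y - dl * (y - a) < C) (at s within {a..})"
        using True by (intro order_tendstoD(2)) auto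
      then obtain d where d: "d > 0" "\<forall>y\<in>{a..}. y \<noteq> s \<and> dist y s < d \<longrightarrow> u k y - dl * (y - a) < C"
        unfolding eventually_at by blast
      show ?thesis unfolding eventually_at_right_field
        using d sa by (intro exI[of _ "s + d"]) (auto simp: dist_real_def)
    next
      case False
      hence eq: "u k s = C + dl * (s - a)" using sgood[of k] by simp
      have "\<forall>j. u j s \<le> u k s" using sgood eq by simp
      hence Dk: "D k s \<le> 0" using neg[OF sa] by blast
      have "((\<lambda>y. (u k y - u k s) / (y - s)) \<longlongrightarrow> D k s) (at s within {a..})"
        using der[OF sa] unfolding has_field_derivative_iff .
      hence "eventually (\<lambda>y. (u k y - u k s) / (y - s) < dl) (at s within {a..})"
        by (rule order_tendstoD(2)) (use Dk that in auto)
      then obtain d where d: "d > 0" "\<forall>y\<in>{a..}. y \<noteq> s \<and> dist y s < d \<longrightarrow> (u k y - u k s) / (y - s) < dl"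
        unfolding eventually_at by blast
      have "u k y \<le> C + dl * (y - a)" if "s < y" "y < s + d" for y
      proof -
        have "(u k y - u k s) / (y - s) < dl" using d that sa by (auto simp: dist_real_def)
        hence "u k y - u k s < dl * (y - s)" using that by (simp add: divide_less_eq)
        thus ?thesis using eq by (simp add: algebra_simps)
      qed
      thus ?thesis unfolding eventually_at_right_field
        using d by (intro exI[of _ "s + d"]) auto
    qed
    have "eventually (\<lambda>y. \<forall>k. u k y \<le> C + dl * (y - a)) (at_right s)"
      using ev by (intro eventually_all_finite) auto
    then obtain b where b: "b > s" "\<forall>y>s. y < b \<longrightarrow> (\<forall>k. u k y \<le> C + dl * (y - a))"
      unfolding eventually_at_right_field by blast
    have "s < b" using b by simp
    then obtain y where y: "y \<in> B" "y < b" using cInf_less_iff[OF Bne bdd] unfolding s_def by blast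
    have "y \<ge> s" using cInf_lower[OF y(1) bdd] unfolding s_def .
    moreover have "y \<noteq> s" using y(1) sgood unfolding B_def by (auto simp: not_less) (metis not_le)
    ultimately have "y > s" by simp
    thus False using b y unfolding B_def by (auto simp: not_less) (metis not_le)
  qed
  fix j t assume t: "t \<ge> a"
  show "u j t \<le> C"
  proof (rule field_le_epsilon)
    fix e :: real assume e: "e > 0"
    show "u j t \<le> C + e"
    proof (cases "t = a")
      case True thus ?thesis using init[of j] e by simp
    next
      case False
      hence "t - a > 0" using t by simp
      hence "u j t \<le> C + (e / (t - a)) * (t - a)" using main[of "e/(t-a)" t j] e t by simp
      thus ?thesis using \<open>t - a > 0\<close> by simp
    qed
  qed
qed

lemma field_eq:
  assumes "g $ k \<noteq> 0"
  shows "field g eta epi x $ k = (1 - epi) * (x $ k powr (- eta) / (\<Sum>l\<in>UNIV. g $ l * x $ l powr (- eta))) + epi - x $ k"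
  using assms unfolding field_def pi_eps_def by (simp add: field_simps)

lemma p_le:
  fixes g x :: "real ^ 'k::finite"
  assumes g: "\<forall>k. g $ k > 0" "(\<Sum>k\<in>UNIV. g $ k) = 1" and x: "\<forall>k. x $ k > 0" and eta: "eta \<ge> 0"
    and mx: "\<forall>j. x $ j \<le> x $ k"
  shows "x $ k powr (- eta) / (\<Sum>l\<in>UNIV. g $ l * x $ l powr (- eta)) \<le> 1"
proof -
  have Spos: "(\<Sum>l\<in>UNIV. g $ l * x $ l powr (- eta)) > 0"
    using g x by (intro sum_pos) (auto intro!: mult_pos_pos simp: less_imp_neq[symmetric])
  have "x $ k powr (- eta) = (\<Sum>l\<in>UNIV. g $ l * x $ k powr (- eta))"
    using g by (simp add: sum_distrib_right[symmetric])
  also have "\<dots> \<le> (\<Sum>l\<in>UNIV. g $ l * x $ l powr (- eta))"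
    using g x eta mx by (intro sum_mono mult_left_mono powr_mono2') (auto simp: less_imp_le)
  finally show ?thesis using Spos by simp
qed

lemma p_ge:
  fixes g x :: "real ^ 'k::finite"
  assumes g: "\<forall>k. g $ k > 0" "(\<Sum>k\<in>UNIV. g $ k) = 1" and x: "\<forall>k. x $ k > 0" and eta: "eta \<ge> 0"
    and mn: "\<forall>j. x $ k \<le> x $ j"
  shows "x $ k powr (- eta) / (\<Sum>l\<in>UNIV. g $ l * x $ l powr (- eta)) \<ge> 1"
proof -
  have Spos: "(\<Sum>l\<in>UNIV. g $ l * x $ l powr (- eta)) > 0"
    using g x by (intro sum_pos) (auto intro!: mult_pos_pos simp: less_imp_neq[symmetric])
  have "(\<Sum>l\<in>UNIV. g $ l * x $ l powr (- eta)) \<le> (\<Sum>l\<in>UNIV. g $ l * x $ k powr (- eta))"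
    using g x eta mn by (intro sum_mono mult_left_mono powr_mono2') (auto simp: less_imp_le)
  also have "\<dots> = x $ k powr (- eta)"
    using g by (simp add: sum_distrib_right[symmetric])
  finally show ?thesis using Spos by simp
qed
lemma sol_bound:
  fixes g :: "real ^ 'k::finite" and z :: "real \<Rightarrow> real ^ 'k"
  assumes g: "\<forall>k. g $ k > 0" "(\<Sum>k\<in>UNIV. g $ k) = 1" and eta: "eta \<ge> 0" and epi: "epi \<le> 1"
    and sol: "is_solution (field g eta epi) {x. \<forall>k. x $ k > 0} z t0 z0"
    and t: "t \<ge> t0"
  shows "norm (z t - (\<chi> k. 1)) \<le> real CARD('k) * norm (z0 - (\<chi> k. 1)) * exp (t0 - t)"
proof -
  define P where "P k x = x $ k powr (- eta) / (\<Sum>l\<in>UNIV. g $ l * x $ l powr (- eta))" for k and x :: "real ^ 'k"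
  define N where "N = norm (z0 - (\<chi> k. 1))"
  have z0: "z t0 = z0" using sol unfolding is_solution_def by blast
  have pos: "\<forall>k. z s $ k > 0" if "s \<ge> t0" for s using sol that unfolding is_solution_def by blast
  have dz: "((\<lambda>s. z s $ k) has_real_derivative (1 - epi) * P k (z s) + epi - z s $ k) (at s within {t0..})"
    if "s \<ge> t0" for s k
  proof -
    have "(z has_vector_derivative field g eta epi (z s)) (at s within {t0..})"
      using sol that unfolding is_solution_def by blast
    from bounded_linear.has_vector_derivative[OF bounded_linear_vec_nth this, of k]
    have "((\<lambda>s. z s $ k) has_real_derivative field g eta epi (z s) $ k) (at s within {t0..})"
      by (simp add: has_real_derivative_iff_has_vector_derivative)
    moreover have "field g eta epi (z s) $ k = (1 - epi) * P k (z s) + epi - z s $ k"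
      unfolding P_def using g by (intro field_eq) (auto simp: less_imp_neq[symmetric])
    ultimately show ?thesis by simp
  qed
  have comp: "\<bar>(z0 - (\<chi> k. 1)) $ k\<bar> \<le> N" for k unfolding N_def by (rule component_le_norm_cart)
  have up: "(z s $ k - 1) * exp s \<le> N * exp t0" if "s \<ge> t0" for s k
  proof (rule max_comparison[where u = "\<lambda>k s. (z s $ k - 1) * exp s" and a = t0
        and D = "\<lambda>k s. (1 - epi) * (P k (z s) - 1) * exp s", OF _ _ _ that])
    fix k s assume s: "t0 \<le> s"
    show "((\<lambda>s. (z s $ k - 1) * exp s) has_real_derivative (1 - epi) * (P k (z s) - 1) * exp s) (at s within {t0..})"
      by (rule derivative_eq_intros dz[OF s] | simp)+ (simp add: algebra_simps)
  next
    fix k s assume s: "t0 \<le> s" and mx: "\<forall>j. (z s $ j - 1) * exp s \<le> (z s $ k - 1) * exp s"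
    hence "\<forall>j. z s $ j \<le> z s $ k" by simp
    hence "P k (z s) \<le> 1" unfolding P_def using p_le[OF g pos[OF s] eta] by blast
    thus "(1 - epi) * (P k (z s) - 1) * exp s \<le> 0" using epi
      by (intro mult_nonpos_nonneg mult_nonneg_nonpos) auto
  next
    fix j show "(z t0 $ j - 1) * exp t0 \<le> N * exp t0" using comp[of j] z0 by simp
  qed
  have lo: "(1 - z s $ k) * exp s \<le> N * exp t0" if "s \<ge> t0" for s k
  proof (rule max_comparison[where u = "\<lambda>k s. (1 - z s $ k) * exp s" and a = t0
        and D = "\<lambda>k s. (1 - epi) * (1 - P k (z s)) * exp s", OF _ _ _ that])
    fix k s assume s: "t0 \<le> s"
    show "((\<lambda>s. (1 - z s $ k) * exp s) has_real_derivative (1 - epi) * (1 - P k (z s)) * exp s) (at s within {t0..})"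
      by (rule derivative_eq_intros dz[OF s] | simp)+ (simp add: algebra_simps)
  next
    fix k s assume s: "t0 \<le> s" and mx: "\<forall>j. (1 - z s $ j) * exp s \<le> (1 - z s $ k) * exp s"
    hence "\<forall>j. z s $ k \<le> z s $ j" by simp
    hence "P k (z s) \<ge> 1" unfolding P_def using p_ge[OF g pos[OF s] eta] by blast
    thus "(1 - epi) * (1 - P k (z s)) * exp s \<le> 0" using epi
      by (intro mult_nonpos_nonneg mult_nonneg_nonpos) auto
  next
    fix j show "(1 - z t0 $ j) * exp t0 \<le> N * exp t0" using comp[of j] z0 by simp
  qed
  have each: "\<bar>(z t - (\<chi> k. 1)) $ k\<bar> \<le> N * exp (t0 - t)" for k
  proof -
    have "\<bar>z t $ k - 1\<bar> * exp t \<le> N * exp t0" using up[OF t, of k] lo[OF t, of k]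
      by (cases "z t $ k \<ge> 1") (auto simp: abs_if)
    hence "\<bar>z t $ k - 1\<bar> \<le> N * exp t0 / exp t" by (simp add: field_simps)
    thus ?thesis by (simp add: exp_diff)
  qed
  have "norm (z t - (\<chi> k. 1)) \<le> (\<Sum>k\<in>UNIV. \<bar>(z t - (\<chi> k. 1)) $ k\<bar>)" by (rule norm_le_l1_cart)
  also have "\<dots> \<le> (\<Sum>k\<in>(UNIV::'k set). N * exp (t0 - t))" by (rule sum_mono) (rule each)
  also have "\<dots> = real CARD('k) * N * exp (t0 - t)" by simp
  finally show ?thesis unfolding N_def .
qed

theorem lemma6:
  fixes g :: "real ^ 'k::finite" and eps eta epi :: real
  assumes "CARD('k) \<ge> 2"
    and "eps > 0"
    and "g \<in> prob_eps eps"
    and "eta \<ge> 0"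
    and "0 \<le> epi" and "epi \<le> 1"
  shows "glob_asymp_stable (field g eta epi) {x. \<forall>k. x $ k > 0} (\<chi> k. 1)"
proof -
  have gp: "\<forall>k. g $ k > 0" using assms(2,3) unfolding prob_eps_def by (auto intro: less_le_trans)
  have gs: "(\<Sum>k\<in>UNIV. g $ k) = 1" using assms(3) unfolding prob_eps_def by auto
  define K where "K = real CARD('k)"
  have Kpos: "K > 0" unfolding K_def by simp
  have bnd: "norm (z t - (\<chi> k. 1)) \<le> K * norm (z0 - (\<chi> k. 1)) * exp (t0 - t)"
    if "is_solution (field g eta epi) {x. \<forall>k. x $ k > 0} z t0 z0" "t \<ge> t0" for z t0 z0 t
    unfolding K_def using sol_bound[OF gp gs assms(4) assms(6) that] .
  have eq0: "field g eta epi (\<chi> k. 1) = 0"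
    unfolding field_def pi_eps_def using gs gp
    by (simp add: vec_eq_iff less_imp_neq[symmetric] field_simps)
  show ?thesis
    unfolding glob_asymp_stable_def
  proof (intro conjI allI impI)
    show "(\<chi> k. 1) \<in> {x. \<forall>k. x $ k > (0::real)}" by simp
    show "field g eta epi (\<chi> k. 1) = 0" by (rule eq0)
  next
    fix e :: real assume e: "e > 0"
    show "\<exists>d>0. \<forall>t0\<ge>0. \<forall>z0\<in>{x. \<forall>k. x $ k > 0}. \<forall>z. is_solution (field g eta epi) {x. \<forall>k. x $ k > 0} z t0 z0 \<and> norm (z0 - (\<chi> k. 1)) < d
          \<longrightarrow> (\<forall>t\<ge>t0. norm (z t - (\<chi> k. 1)) < e)"
    proof (intro exI[of _ "e / K"] conjI allI impI ballI)
      show "e / K > 0" using e Kpos by simp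
    next
      fix t0 :: real and z0 z t
      assume h: "is_solution (field g eta epi) {x. \<forall>k. x $ k > 0} z t0 z0 \<and> norm (z0 - (\<chi> k. 1)) < e / K"
        and t: "t \<ge> t0"
      have "norm (z t - (\<chi> k. 1)) \<le> K * norm (z0 - (\<chi> k. 1)) * exp (t0 - t)" using bnd h t by blast
      also have "\<dots> \<le> K * norm (z0 - (\<chi> k. 1))" using t Kpos by (simp add: mult_left_le)
      also have "\<dots> < e" using h Kpos by (simp add: field_simps)
      finally show "norm (z t - (\<chi> k. 1)) < e" .
    qed
  next
    fix e \<rho> :: real assume e: "e > 0" and r: "\<rho> > 0"
    define T where "T = max 0 (ln (K * \<rho> / e)) + 1"
    have eT: "K * \<rho> * exp (- T) < e"
    proof -
      have "ln (K * \<rho> / e) < T" unfolding T_def by simp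
      hence "exp (ln (K * \<rho> / e)) < exp T" by simp
      hence "K * \<rho> / e < exp T" using Kpos r e by simp
      hence "K * \<rho> < e * exp T" using e by (simp add: field_simps)
      thus ?thesis by (simp add: exp_minus field_simps)
    qed
    show "\<exists>T. \<forall>t0\<ge>0. \<forall>z0\<in>{x. \<forall>k. x $ k > 0}. \<forall>z. is_solution (field g eta epi) {x. \<forall>k. x $ k > 0} z t0 z0 \<and> norm (z0 - (\<chi> k. 1)) < \<rho>
          \<longrightarrow> (\<forall>t\<ge>t0 + T. norm (z t - (\<chi> k. 1)) < e)"
    proof (intro exI[of _ T] conjI allI impI ballI)
      fix t0 :: real and z0 z t
      assume h: "is_solution (field g eta epi) {x. \<forall>k. x $ k > 0} z t0 z0 \<and> norm (z0 - (\<chi> k. 1)) < \<rho>"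
        and t: "t \<ge> t0 + T"
      have T0: "T \<ge> 0" unfolding T_def by simp
      have "norm (z t - (\<chi> k. 1)) \<le> K * norm (z0 - (\<chi> k. 1)) * exp (t0 - t)" using bnd h t T0 by auto
      also have "\<dots> \<le> K * \<rho> * exp (- T)"
        using h t Kpos r by (intro mult_mono mult_left_mono) (auto simp: less_imp_le)
      also have "\<dots> < e" by (rule eT)
      finally show "norm (z t - (\<chi> k. 1)) < e" .
    qed
  qed
qed

end
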